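(* Let $(V,(\cdot\,,\cdot)_V)$ be an admissible integral $\mathrm{Cl}_{n,0}$-module (with positive definite inner product $(\cdot\,,\cdot)_V$) and $(U,\langle\cdot\,,\cdot\rangle_U)$ an admissible integral $\mathrm{Cl}_{0,2}$-module. Then the scalar product space $V\otimes U$ with scalar product $\langle v\otimes u,v'\otimes u'\rangle=(v,v')_V\langle u,u'\rangle_U$ is (carries the structure of) an admissible integral $\mathrm{Cl}_{0,n+2}$-module.
   Context: A scalar product is a real symmetric non-degenerate bilinear form. $\mathrm{Cl}_{p,q}$ is the real Clifford algebra generated by $\mathbb R^{p,q}$ ($\mathbb R^{p+q}$ with quadratic form $x_1^2+\dots+x_p^2-x_{p+1}^2-\dots-x_{p+q}^2$) with relation $z^2=-\langle z,z\rangle\cdot1$; orthonormal generators $z_k$ satisfy $\langle z_k,z_l\rangle=0$ ($k\neq l$), $\langle z_k,z_k\rangle=\pm1$. A $\mathrm{Cl}_{p,q}$-module $V$ with representation $J$ is admissible if it carries a scalar product with $\langle J_zu,v\rangle_V=-\langle u,J_zv\rangle_V$ for all $z,u,v$; it is an admissible integral module if it has a basis $\{v_\alpha\}$ with $\langle v_\alpha,v_\beta\rangle_V=0$ ($\alpha\neq\beta$), $\langle v_\alpha,v_\alpha\rangle_V=\pm1$, and $\langle J_{z_k}v_\alpha,v_\beta\rangle_V\in\{1,-1,0\}$ for all orthonormal generators $z_k$ and all $\alpha,\beta$. *)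

theory Defs
  imports "HOL-Analysis.Analysis"
begin

text \<open>Coordinate model: a finite-dimensional real vector space is \<open>real^'a\<close>.
  A Cl_{p,q}-module is given by the images \<open>J k\<close> (k < p+q) of the standard
  orthonormal generators z_k of R^{p,q}; z_k has square norm +1 for k < p and -1
  for p \<le> k < p+q. The relation z^2 = -<z,z> becomes J_k^2 = -<z_k,z_k> id and
  J_k J_l = - J_l J_k for k \<noteq> l.\<close>

definition gen_sign :: "nat \<Rightarrow> nat \<Rightarrow> real" where
  "gen_sign p k = (if k < p then 1 else -1)"

definition clifford_rep :: "nat \<Rightarrow> nat \<Rightarrow> (nat \<Rightarrow> 'v::real_vector \<Rightarrow> 'v) \<Rightarrow> bool" where
  "clifford_rep p q J \<longleftrightarrow>
     (\<forall>k<p+q. linear (J k)) \<and>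
     (\<forall>k<p+q. \<forall>x. J k (J k x) = - (gen_sign p k *\<^sub>R x)) \<and>
     (\<forall>k<p+q. \<forall>l<p+q. k \<noteq> l \<longrightarrow> (\<forall>x. J k (J l x) = - J l (J k x)))"

definition scalar_product :: "('v::real_vector \<Rightarrow> 'v \<Rightarrow> real) \<Rightarrow> bool" where
  "scalar_product B \<longleftrightarrow> bilinear B \<and> (\<forall>x y. B x y = B y x) \<and>
     (\<forall>x. (\<forall>y. B x y = 0) \<longrightarrow> x = 0)"

definition admissible_module :: "nat \<Rightarrow> nat \<Rightarrow> (nat \<Rightarrow> 'v::real_vector \<Rightarrow> 'v) \<Rightarrow> ('v \<Rightarrow> 'v \<Rightarrow> real) \<Rightarrow> bool" where
  "admissible_module p q J B \<longleftrightarrow> clifford_rep p q J \<and> scalar_product B \<and>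
     (\<forall>k<p+q. \<forall>u v. B (J k u) v = - B u (J k v))"

definition admissible_integral_module :: "nat \<Rightarrow> nat \<Rightarrow> (nat \<Rightarrow> 'v::real_vector \<Rightarrow> 'v) \<Rightarrow> ('v \<Rightarrow> 'v \<Rightarrow> real) \<Rightarrow> bool" where
  "admissible_integral_module p q J B \<longleftrightarrow> admissible_module p q J B \<and>
     (\<exists>S. independent S \<and> span S = UNIV \<and>
        (\<forall>a\<in>S. \<forall>b\<in>S. a \<noteq> b \<longrightarrow> B a b = 0) \<and>
        (\<forall>a\<in>S. B a a = 1 \<or> B a a = -1) \<and>
        (\<forall>k<p+q. \<forall>a\<in>S. \<forall>b\<in>S. B (J k a) b \<in> {1, -1, 0}))"

definition tensor :: "real^'a \<Rightarrow> real^'b \<Rightarrow> real^('a \<times> 'b)" where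
  "tensor v u = (\<chi> ij. v $ fst ij * u $ snd ij)"

end

theory Submission
  imports Defs
begin

lemma tensor_axis: "tensor (axis i 1) (axis j 1) = axis (i,j) (1::real)"
  by (auto simp: tensor_def vec_eq_iff axis_def)

lemma bilinear_tensor: "bilinear tensor"
  unfolding bilinear_def
  by (auto intro!: linearI simp: tensor_def vec_eq_iff algebra_simps)

lemma tensor_neg1[simp]: "tensor (- v) u = - tensor v u"
  by (simp add: tensor_def vec_eq_iff)
lemma tensor_neg2[simp]: "tensor v (- u) = - tensor v u"
  by (simp add: tensor_def vec_eq_iff)

lemma Basis_tensor:
  fixes b :: "real^('a::finite\<times>'b::finite)" assumes "b \<in> Basis" shows "\<exists>v u. b = tensor v u"
proof -
  from assms obtain p where "b = axis p 1" unfolding Basis_vec_def by auto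
  then show ?thesis using tensor_axis[of "fst p" "snd p"] by (metis prod.collapse)
qed

lemma lin_eq_tensor:
  fixes f g :: "real^('a::finite\<times>'b::finite) \<Rightarrow> real^('a::finite\<times>'b::finite)"
  assumes "linear f" "linear g" "\<And>v u. f (tensor v u) = g (tensor v u)"
  shows "f = g"
  by (rule linear_eq_stdbasis[OF assms(1,2)]) (metis Basis_tensor assms(3))

lemma bilin_eq_tensor:
  fixes f g :: "real^('a::finite\<times>'b::finite) \<Rightarrow> real^('a::finite\<times>'b::finite) \<Rightarrow> real"
  assumes "bilinear f" "bilinear g" "\<And>v u v' u'. f (tensor v u) (tensor v' u') = g (tensor v u) (tensor v' u')"
  shows "f = g"
  by (rule bilinear_eq_stdbasis[OF assms(1,2)]) (metis Basis_tensor assms(3))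

definition optens :: "(real^'a::finite \<Rightarrow> real^'a) \<Rightarrow> (real^'b \<Rightarrow> real^'b) \<Rightarrow> real^('a::finite\<times>'b::finite) \<Rightarrow> real^('a::finite\<times>'b::finite)" where
  "optens f g x = (\<chi> p. \<Sum>q\<in>UNIV. (matrix f $ fst p $ fst q * matrix g $ snd p $ snd q) * x $ q)"

lemma linear_optens: "linear (optens f g)"
  by (auto intro!: linearI simp: optens_def vec_eq_iff algebra_simps sum.distrib sum_distrib_left)

lemma optens_tensor:
  assumes "linear f" "linear g"
  shows "optens f g (tensor v u) = tensor (f v) (g u)"
proof -
  have fv: "f v $ i = (\<Sum>i'\<in>UNIV. matrix f $ i $ i' * v $ i')" for i
    using matrix_works[OF assms(1)[folded linear_matrix_vector_mul_eq], of v] by (metis (no_types) matrix_vector_mult_def vec_lambda_beta)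
  have gu: "g u $ j = (\<Sum>j'\<in>UNIV. matrix g $ j $ j' * u $ j')" for j
    using matrix_works[OF assms(2)[folded linear_matrix_vector_mul_eq], of u] by (metis (no_types) matrix_vector_mult_def vec_lambda_beta)
  show ?thesis
    unfolding optens_def tensor_def vec_eq_iff
  proof
    fix p :: "'a\<times>'b"
    have "(\<Sum>q\<in>UNIV. (matrix f $ fst p $ fst q * matrix g $ snd p $ snd q) * (v $ fst q * u $ snd q))
       = (\<Sum>q\<in>UNIV \<times> UNIV. (matrix f $ fst p $ fst q * v $ fst q) * (matrix g $ snd p $ snd q * u $ snd q))"
      by (rule sum.cong) (auto simp: UNIV_Times_UNIV)
    also have "\<dots> = (\<Sum>i'\<in>UNIV. matrix f $ fst p $ i' * v $ i') * (\<Sum>j'\<in>UNIV. matrix g $ snd p $ j' * u $ j')"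
      by (simp add: sum_product sum.cartesian_product case_prod_beta')
    finally show "(\<chi> p. \<Sum>q\<in>UNIV. matrix f $ fst p $ fst q * matrix g $ snd p $ snd q * (\<chi> ij. v $ fst ij * u $ snd ij) $ q) $ p =
         (\<chi> ij. f v $ fst ij * g u $ snd ij) $ p"
      by (simp add: fv gu)
  qed
qed

lemma bil_suml: "bilinear h \<Longrightarrow> h (sum f S) y = (\<Sum>s\<in>S. h (f s) y)"
  unfolding bilinear_def by (simp add: linear_sum[where f="\<lambda>x. h x y"])
lemma bil_sumr: "bilinear h \<Longrightarrow> h y (sum f S) = (\<Sum>s\<in>S. h y (f s))"
  unfolding bilinear_def by (simp add: linear_sum[where f="\<lambda>x. h y x"])

lemma sum_single:
  assumes "finite S" "a \<in> S" "\<And>x. x \<in> S \<Longrightarrow> x \<noteq> a \<Longrightarrow> f x = 0"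
  shows "sum f S = f a"
  using assms by (subst sum.remove[of S a]) (auto intro!: sum.neutral)

lemma orth_indep:
  fixes B :: "'v::real_vector \<Rightarrow> 'v \<Rightarrow> real"
  assumes bil: "bilinear B" and fin: "finite S"
    and orth: "\<And>s t. s \<in> S \<Longrightarrow> t \<in> S \<Longrightarrow> s \<noteq> t \<Longrightarrow> B s t = 0"
    and nz: "\<And>s. s \<in> S \<Longrightarrow> B s s \<noteq> 0"
  shows "independent S"
proof
  assume "dependent S"
  then obtain u t where t: "t \<in> S" "u t \<noteq> 0" and z: "(\<Sum>v\<in>S. u v *\<^sub>R v) = 0"
    using dependent_finite[OF fin] by auto
  have "0 = B (\<Sum>v\<in>S. u v *\<^sub>R v) t" using z bilinear_lzero[OF bil] by simp
  also have "\<dots> = (\<Sum>v\<in>S. u v * B v t)" by (simp add: bil_suml[OF bil] bilinear_lmul[OF bil])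
  also have "\<dots> = u t * B t t"
    by (rule sum_single) (use orth t fin in auto)
  finally show False using t nz[OF t(1)] by simp
qed

lemma orth_nondeg:
  fixes B :: "'v::real_vector \<Rightarrow> 'v \<Rightarrow> real"
  assumes bil: "bilinear B" and fin: "finite S" and sp: "span S = UNIV"
    and orth: "\<And>s t. s \<in> S \<Longrightarrow> t \<in> S \<Longrightarrow> s \<noteq> t \<Longrightarrow> B s t = 0"
    and nz: "\<And>s. s \<in> S \<Longrightarrow> B s s \<noteq> 0"
    and x: "\<forall>y. B x y = 0"
  shows "x = 0"
proof -
  have "x \<in> span S" using sp by simp
  then obtain u where xu: "x = (\<Sum>v\<in>S. u v *\<^sub>R v)" using span_finite[OF fin] by auto
  have "u t = 0" if t: "t \<in> S" for t
  proof -
    have "0 = B (\<Sum>v\<in>S. u v *\<^sub>R v) t" using x xu by simp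
    also have "\<dots> = (\<Sum>v\<in>S. u v * B v t)" by (simp add: bil_suml[OF bil] bilinear_lmul[OF bil])
    also have "\<dots> = u t * B t t"
      by (rule sum_single) (use orth t fin in auto)
    finally show ?thesis using nz[OF t] by simp
  qed
  then show ?thesis using xu by simp
qed

locale cl02 =
  fixes K0 K1 :: "'v::euclidean_space \<Rightarrow> 'v" and BU :: "'v \<Rightarrow> 'v \<Rightarrow> real"
  assumes lin0: "linear K0" and lin1: "linear K1"
    and sq0: "\<And>x. K0 (K0 x) = x" and sq1: "\<And>x. K1 (K1 x) = x"
    and anti: "\<And>x. K1 (K0 x) = - K0 (K1 x)"
    and bil: "bilinear BU" and sym: "\<And>x y. BU x y = BU y x"
    and nondeg: "\<And>x. (\<forall>y. BU x y = 0) \<Longrightarrow> x = 0"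
    and sk0: "\<And>x y. BU (K0 x) y = - BU x (K0 y)"
    and sk1: "\<And>x y. BU (K1 x) y = - BU x (K1 y)"
begin

lemma K1K01[simp]: "K1 (K0 (K1 x)) = - K0 x"
  using anti[of "K1 x"] sq1 by simp

lemma lin_simps[simp]: "K0 (x + y) = K0 x + K0 y" "K0 (x - y) = K0 x - K0 y" "K0 (- x) = - K0 x"
  "K0 (c *\<^sub>R x) = c *\<^sub>R K0 x" "K0 0 = 0"
  "K1 (x + y) = K1 x + K1 y" "K1 (x - y) = K1 x - K1 y" "K1 (- x) = - K1 x"
  "K1 (c *\<^sub>R x) = c *\<^sub>R K1 x" "K1 0 = 0"
  "K0 (sum f S) = (\<Sum>s\<in>S. K0 (f s))" "K1 (sum f S) = (\<Sum>s\<in>S. K1 (f s))"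
  using lin0 lin1 by (simp_all add: linear_add linear_diff linear_neg linear_scale linear_0 linear_sum)

lemma BU_simps[simp]: "BU (x + y) z = BU x z + BU y z" "BU z (x + y) = BU z x + BU z y"
  "BU (x - y) z = BU x z - BU y z" "BU z (x - y) = BU z x - BU z y"
  "BU (- x) z = - BU x z" "BU z (- x) = - BU z x"
  "BU (c *\<^sub>R x) z = c * BU x z" "BU z (c *\<^sub>R x) = c * BU z x"
  "BU 0 z = 0" "BU z 0 = 0"
  "BU (sum f S) z = (\<Sum>s\<in>S. BU (f s) z)" "BU z (sum f S) = (\<Sum>s\<in>S. BU z (f s))"
  using bil by (simp_all add: bilinear_ladd bilinear_radd bilinear_lsub bilinear_rsub bilinear_lneg
      bilinear_rneg bilinear_lmul bilinear_rmul bilinear_lzero bilinear_rzero bil_suml bil_sumr)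

lemma sk01: "BU (K0 (K1 x)) y = - BU x (K0 (K1 y))"
  by (simp add: sk0 sk1 anti)

lemma self0[simp]: "BU x (K0 x) = 0" "BU (K0 x) x = 0"
  using sk0[of x x] sym[of x "K0 x"] by auto
lemma self1[simp]: "BU x (K1 x) = 0" "BU (K1 x) x = 0"
  using sk1[of x x] sym[of x "K1 x"] by auto
lemma self01[simp]: "BU x (K0 (K1 x)) = 0" "BU (K0 (K1 x)) x = 0"
  using sk01[of x x] sym[of x "K0 (K1 x)"] by auto

lemma nrm[simp]: "BU (K0 x) (K0 x) = - BU x x" "BU (K1 x) (K1 x) = - BU x x"
  "BU (K0 (K1 x)) (K0 (K1 x)) = BU x x"
  by (simp_all add: sk0 sk1 sq0 sq1)

lemma cross[simp]: "BU (K0 x) (K1 x) = 0" "BU (K1 x) (K0 x) = 0"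
  "BU (K0 x) (K0 (K1 x)) = 0" "BU (K0 (K1 x)) (K0 x) = 0"
  "BU (K1 x) (K0 (K1 x)) = 0" "BU (K0 (K1 x)) (K1 x) = 0"
proof -
  show a: "BU (K0 x) (K1 x) = 0" by (simp add: sk0)
  then show "BU (K1 x) (K0 x) = 0" by (simp add: sym)
  show b: "BU (K0 x) (K0 (K1 x)) = 0" by (simp add: sk0 sq0)
  then show "BU (K0 (K1 x)) (K0 x) = 0" by (simp add: sym)
  show c: "BU (K1 x) (K0 (K1 x)) = 0" by (simp add: sk1)
  then show "BU (K0 (K1 x)) (K1 x) = 0" by (simp add: sym)
qed

definition quad where "quad e = {e, K0 e, K1 e, K0 (K1 e)}"
definition QQ where "QQ E = (\<Union>e\<in>E. quad e)"
definition OK where "OK E \<longleftrightarrow> finite E \<and> (\<forall>e\<in>E. BU e e = 1) \<and>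
   (\<forall>e\<in>E. \<forall>e'\<in>E. e \<noteq> e' \<longrightarrow> (\<forall>q\<in>quad e. \<forall>q'\<in>quad e'. BU q q' = 0))"
definition Exp where "Exp E x = (\<Sum>e\<in>E. BU x e *\<^sub>R e - BU x (K0 e) *\<^sub>R K0 e - BU x (K1 e) *\<^sub>R K1 e
     + BU x (K0 (K1 e)) *\<^sub>R K0 (K1 e))"
definition Rf where "Rf E x = (\<Sum>e\<in>E. BU x e *\<^sub>R e - BU x (K0 e) *\<^sub>R K0 e + BU x (K1 e) *\<^sub>R K1 e
     - BU x (K0 (K1 e)) *\<^sub>R K0 (K1 e))"

lemma OK_cross: "OK E \<Longrightarrow> e \<in> E \<Longrightarrow> e' \<in> E \<Longrightarrow> e \<noteq> e' \<Longrightarrow> q \<in> quad e \<Longrightarrow> q' \<in> quad e' \<Longrightarrow> BU q q' = 0"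
  unfolding OK_def by blast

lemma quad_in: "e \<in> quad e" "K0 e \<in> quad e" "K1 e \<in> quad e" "K0 (K1 e) \<in> quad e"
  by (auto simp: quad_def)

lemma BU_Exp:
  assumes ok: "OK E" and e: "e \<in> E" and q: "q \<in> quad e"
  shows "BU (Exp E x) q = BU x q"
proof -
  have fin: "finite E" using ok by (simp add: OK_def)
  have one: "BU e e = 1" using ok e by (simp add: OK_def)
  have "BU (Exp E x) q = (\<Sum>e'\<in>E. BU x e' * BU e' q - BU x (K0 e') * BU (K0 e') q
      - BU x (K1 e') * BU (K1 e') q + BU x (K0 (K1 e')) * BU (K0 (K1 e')) q)"
    by (simp add: Exp_def)
  also have "\<dots> = BU x e * BU e q - BU x (K0 e) * BU (K0 e) q
      - BU x (K1 e) * BU (K1 e) q + BU x (K0 (K1 e)) * BU (K0 (K1 e)) q"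
    by (rule sum_single[OF fin e]) (use OK_cross[OF ok _ e _ _ q] quad_in in auto)
  also have "\<dots> = BU x q"
    using q one by (auto simp: quad_def sym)
  finally show ?thesis .
qed

lemma Rf_e:
  assumes ok: "OK E" and e: "e \<in> E"
  shows "Rf E e = e"
proof -
  have fin: "finite E" using ok by (simp add: OK_def)
  have one: "BU e e = 1" using ok e by (simp add: OK_def)
  have "Rf E e = BU e e *\<^sub>R e - BU e (K0 e) *\<^sub>R K0 e + BU e (K1 e) *\<^sub>R K1 e
     - BU e (K0 (K1 e)) *\<^sub>R K0 (K1 e)"
    unfolding Rf_def
    by (rule sum_single[OF fin e]) (use OK_cross[OF ok e _ _ quad_in(1)] quad_in in auto)
  then show ?thesis using one by simp
qed

lemma Rf_K0: "Rf E (K0 x) = K0 (Rf E x)"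
  unfolding Rf_def by (auto intro!: sum.cong simp: sk0 sq0 algebra_simps)

lemma Rf_K1: "Rf E (K1 x) = - K1 (Rf E x)"
  unfolding Rf_def by (auto intro!: sum.cong simp: sk1 sq1 anti algebra_simps sum_negf[symmetric])

lemma Rf_sym: "BU (Rf E x) y = BU x (Rf E y)"
  unfolding Rf_def by (auto intro!: sum.cong simp: algebra_simps sym[of y])

lemma Rf_lin: "linear (Rf E)"
proof (rule linearI)
  fix x y show "Rf E (x + y) = Rf E x + Rf E y"
    unfolding Rf_def sum.distrib[symmetric] by (rule sum.cong) (simp_all add: algebra_simps)
next
  fix c x show "Rf E (c *\<^sub>R x) = c *\<^sub>R Rf E x"
    unfolding Rf_def scaleR_sum_right by (rule sum.cong) (simp_all add: algebra_simps)
qed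

lemma Rf_quad:
  assumes ok: "OK E" and e: "e \<in> E"
  shows "Rf E e = e" "Rf E (K0 e) = K0 e" "Rf E (K1 e) = - K1 e" "Rf E (K0 (K1 e)) = - K0 (K1 e)"
  using Rf_e[OF ok e] by (simp_all add: Rf_K0 Rf_K1)

lemma RfRf:
  assumes ok: "OK E"
  shows "Rf E (Rf E x) = Exp E x"
proof -
  have "Rf E y = (\<Sum>e\<in>E. BU y e *\<^sub>R e - BU y (K0 e) *\<^sub>R K0 e + BU y (K1 e) *\<^sub>R K1 e
     - BU y (K0 (K1 e)) *\<^sub>R K0 (K1 e))" for y by (simp add: Rf_def)
  then have "Rf E (Rf E x) = (\<Sum>e\<in>E. BU (Rf E x) e *\<^sub>R e - BU (Rf E x) (K0 e) *\<^sub>R K0 e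
     + BU (Rf E x) (K1 e) *\<^sub>R K1 e - BU (Rf E x) (K0 (K1 e)) *\<^sub>R K0 (K1 e))" .
  also have "\<dots> = Exp E x"
    unfolding Exp_def by (rule sum.cong) (simp_all add: Rf_sym Rf_quad[OF ok])
  finally show ?thesis .
qed

lemma Exp_span: "Exp E x \<in> span (QQ E)"
  unfolding Exp_def
  by (intro span_sum span_add span_diff span_scale span_base) (auto simp: QQ_def quad_def)

lemma QQ_K0: "q \<in> QQ E \<Longrightarrow> K0 q \<in> QQ E"
  by (auto simp: QQ_def quad_def sq0)

lemma QQ_K1: "q \<in> QQ E \<Longrightarrow> K1 q \<in> QQ E \<or> - K1 q \<in> QQ E"
  by (auto simp: QQ_def quad_def sq1 anti)

lemma QQ_fin: "finite E \<Longrightarrow> finite (QQ E)"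
  by (auto simp: QQ_def quad_def)

lemma QQ_Rf: "OK E \<Longrightarrow> q \<in> QQ E \<Longrightarrow> Rf E q = q \<or> Rf E q = - q"
  by (auto simp: QQ_def quad_def Rf_quad)

lemma OK_indep: "OK E \<Longrightarrow> independent E"
  by (rule orth_indep[OF bil]) (auto simp: OK_def quad_def)

lemma exists_full: "\<exists>E. OK E \<and> (\<forall>x. Exp E x = x)"
proof -
  have bound: "card E \<le> DIM('v)" if "OK E" for E
    using independent_bound[OF OK_indep[OF that]] by simp
  have "OK {}" by (simp add: OK_def)
  have "\<exists>k. (\<exists>E. OK E \<and> card E = k) \<and> (\<forall>y. (\<exists>E. OK E \<and> card E = y) \<longrightarrow> y \<le> k)"
  proof (rule Nat.ex_has_greatest_nat[where k=0 and b="DIM('v)"])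
    show "\<exists>E. OK E \<and> card E = 0" using \<open>OK {}\<close> by (intro exI[of _ "{}"]) simp
    show "\<forall>y. (\<exists>E. OK E \<and> card E = y) \<longrightarrow> y \<le> DIM('v)" using bound by blast
  qed
  then obtain k where k: "\<exists>E. OK E \<and> card E = k" and kmax: "\<forall>k'. (\<exists>E. OK E \<and> card E = k') \<longrightarrow> k' \<le> k"
    by blast
  then obtain E where ok: "OK E" and cE: "card E = k" by blast
  have fin: "finite E" using ok by (simp add: OK_def)
  have "\<forall>x. Exp E x = x"
  proof (rule ccontr)
    assume "\<not> (\<forall>x. Exp E x = x)"
    then obtain x where x: "Exp E x \<noteq> x" by blast
    define Z where "Z = {z. \<forall>q\<in>QQ E. BU z q = 0}"
    have ExpZ: "y - Exp E y \<in> Z" for y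
      unfolding Z_def QQ_def using BU_Exp[OF ok] by auto
    have Zadd: "a + b \<in> Z" if "a \<in> Z" "b \<in> Z" for a b using that by (simp add: Z_def)
    have Zscale: "c *\<^sub>R a \<in> Z" if "a \<in> Z" for a c using that by (simp add: Z_def)
    have ZK0: "K0 a \<in> Z" if "a \<in> Z" for a using that QQ_K0 by (simp add: Z_def sk0)
    have ZK1: "K1 a \<in> Z" if a: "a \<in> Z" for a
    proof -
      have "BU a (K1 q) = 0" if "q \<in> QQ E" for q
      proof -
        have aq: "\<forall>q\<in>QQ E. BU a q = 0" using a unfolding Z_def by simp
        show ?thesis
        proof (cases "K1 q \<in> QQ E")
          case True then show ?thesis using aq by blast
        next
          case False then have "- K1 q \<in> QQ E" using QQ_K1[OF that] by blast
          then have "BU a (- K1 q) = 0" using aq by blast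
          then show ?thesis by simp
        qed
      qed
      then show ?thesis by (simp add: Z_def sk1)
    qed
    have ZExp: "BU a (Exp E y) = 0" if a: "a \<in> Z" for a y
    proof -
      have "\<And>e. e \<in> E \<Longrightarrow> BU a e = 0 \<and> BU a (K0 e) = 0 \<and> BU a (K1 e) = 0 \<and> BU a (K0 (K1 e)) = 0"
        using a unfolding Z_def QQ_def quad_def by auto
      then show ?thesis unfolding Exp_def by (simp add: sum.neutral)
    qed
    define z where "z = x - Exp E x"
    have zZ: "z \<in> Z" using ExpZ z_def by simp
    have "z \<noteq> 0" using x z_def by simp
    then obtain y where y: "BU z y \<noteq> 0" using nondeg by blast
    define y' where "y' = y - Exp E y"
    have y'Z: "y' \<in> Z" using ExpZ y'_def by simp
    have zy': "BU z y' \<noteq> 0" using y ZExp[OF zZ] y'_def by simp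
    obtain w where wZ: "w \<in> Z" and w: "BU w w \<noteq> 0"
    proof (cases "BU z z = 0 \<and> BU y' y' = 0")
      case True
      have "BU (z + y') (z + y') = 2 * BU z y'" using True by (simp add: sym[of y' z])
      then show ?thesis using that[OF Zadd[OF zZ y'Z]] zy' by simp
    next
      case False then show ?thesis using that zZ y'Z by blast
    qed
    obtain e0 where e0Z: "e0 \<in> Z" and e0: "BU e0 e0 = 1"
    proof (cases "BU w w > 0")
      case True
      let ?e = "(1 / sqrt (BU w w)) *\<^sub>R w"
      have "BU ?e ?e = 1" using True by (simp add: power2_eq_square[symmetric])
      then show ?thesis using that Zscale[OF wZ] by blast
    next
      case False
      then have neg: "- BU w w > 0" using w by simp
      let ?e = "(1 / sqrt (- BU w w)) *\<^sub>R K0 w"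
      have "BU ?e ?e = 1" using neg by (simp add: power2_eq_square[symmetric])
      then show ?thesis using that Zscale[OF ZK0[OF wZ]] by blast
    qed
    have quadZ: "quad e0 \<subseteq> Z" using e0Z ZK0 ZK1 by (auto simp: quad_def)
    have notin: "e0 \<notin> E"
    proof
      assume "e0 \<in> E"
      then have "e0 \<in> QQ E" by (auto simp: QQ_def quad_def)
      then show False using e0Z e0 by (simp add: Z_def)
    qed
    have ok': "OK (insert e0 E)"
      unfolding OK_def
    proof (intro conjI ballI impI)
      show "finite (insert e0 E)" using fin by simp
    next
      fix e assume "e \<in> insert e0 E" then show "BU e e = 1" using e0 ok by (auto simp: OK_def)
    next
      fix e e' q q' assume ee: "e \<in> insert e0 E" "e' \<in> insert e0 E" "e \<noteq> e'"
        and q: "q \<in> quad e" "q' \<in> quad e'"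
      show "BU q q' = 0"
      proof (cases "e = e0")
        case True
        then have "e' \<in> E" "q \<in> Z" using ee quadZ q by auto
        then show ?thesis using q unfolding Z_def QQ_def by auto
      next
        case False
        show ?thesis
        proof (cases "e' = e0")
          case True
          then have "e \<in> E" "q' \<in> Z" using ee quadZ q False by auto
          then show ?thesis using q unfolding Z_def QQ_def by (auto simp: sym[of q])
        next
          case False2: False
          then show ?thesis using False ee q OK_cross[OF ok] by auto
        qed
      qed
    qed
    have "card (insert e0 E) = k + 1" using notin fin cE by simp
    then have "k + 1 \<le> k" using kmax ok' by blast
    then show False by simp
  qed
  then show ?thesis using ok by blast
qed


definition Mop where "Mop E x = - K1 (Rf E x)"

lemma Rf_simps: "Rf E (x + y) = Rf E x + Rf E y" "Rf E (- x) = - Rf E x" "Rf E (c *\<^sub>R x) = c *\<^sub>R Rf E x"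
  using Rf_lin by (simp_all add: linear_add linear_neg linear_scale)

lemma M_lin: "linear (Mop E)"
  by (rule linearI) (simp_all add: Mop_def Rf_simps)

lemma M_M: "OK E \<Longrightarrow> \<forall>x. Exp E x = x \<Longrightarrow> Mop E (Mop E x) = - x"
  by (simp add: Mop_def Rf_simps Rf_K1 RfRf sq1)

lemma M_K0: "Mop E (K0 x) = - K0 (Mop E x)"
  by (simp add: Mop_def Rf_K0 anti)

lemma M_K1: "Mop E (K1 x) = - K1 (Mop E x)"
  by (simp add: Mop_def Rf_K1)

lemma M_sym: "BU (Mop E x) y = BU x (Mop E y)"
  by (simp add: Mop_def sk1 Rf_sym Rf_K1)

lemma M_QQ: "OK E \<Longrightarrow> q \<in> QQ E \<Longrightarrow> Mop E q \<in> QQ E \<or> - Mop E q \<in> QQ E"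
  using QQ_Rf[of E q] QQ_K1[of q E] by (auto simp: Mop_def)

lemma QQ_cases:
  assumes ok: "OK E" and q: "q \<in> QQ E" and q': "q' \<in> QQ E"
  shows "(q \<noteq> q' \<longrightarrow> BU q q' = 0) \<and> (BU q q = 1 \<or> BU q q = -1)"
proof -
  obtain e e' where e: "e \<in> E" "q \<in> quad e" and e': "e' \<in> E" "q' \<in> quad e'"
    using q q' by (auto simp: QQ_def)
  have one: "BU e e = 1" using ok e by (simp add: OK_def)
  have "BU q q = 1 \<or> BU q q = -1" using e(2) one by (auto simp: quad_def)
  moreover have "BU q q' = 0" if "q \<noteq> q'"
  proof (cases "e = e'")
    case True then show ?thesis using e e' one that by (auto simp: quad_def)
  next
    case False then show ?thesis using OK_cross[OF ok e(1) e'(1) False e(2) e'(2)] by blast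
  qed
  ultimately show ?thesis by blast
qed

lemma QQ_val: "OK E \<Longrightarrow> q \<in> QQ E \<Longrightarrow> q' \<in> QQ E \<Longrightarrow> BU q q' \<in> {1, -1, 0}"
  using QQ_cases[of E q q'] by (cases "q = q'") auto

lemma QQ_span: "\<forall>x. Exp E x = x \<Longrightarrow> span (QQ E) = UNIV"
  using Exp_span by (metis UNIV_I subsetI subset_antisym)

end

lemma lin_comp2: "linear f \<Longrightarrow> linear g \<Longrightarrow> linear (\<lambda>x. f (g x))"
  using linear_compose[of g f] by (simp add: o_def)
lemma lin_comp2n: "linear f \<Longrightarrow> linear g \<Longrightarrow> linear (\<lambda>x. - f (g x))"
  by (rule linearI) (simp_all add: linear_add linear_scale)
lemma lin_idf: "linear (\<lambda>x. x)" by (rule linearI) simp_all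

lemma bil_compL: "bilinear B \<Longrightarrow> linear L \<Longrightarrow> bilinear (\<lambda>x y. B (L x) y)"
  unfolding bilinear_def using lin_comp2 by blast
lemma bil_compR: assumes "bilinear B" "linear L" shows "bilinear (\<lambda>x y. - B x (L y))"
  unfolding bilinear_def
proof (intro allI conjI)
  fix y show "linear (\<lambda>x. - B x (L y))"
    by (rule linearI) (simp_all add: bilinear_ladd[OF assms(1)] bilinear_lmul[OF assms(1)])
next
  fix x show "linear (\<lambda>y. - B x (L y))"
    using assms lin_comp2n[of "B x" L] unfolding bilinear_def by blast
qed
lemma bil_swap: "bilinear B \<Longrightarrow> bilinear (\<lambda>x y. B y x)"
  unfolding bilinear_def by blast

lemma int_mult: "(x::real) \<in> {1,-1,0} \<Longrightarrow> y \<in> {1,-1,0} \<Longrightarrow> x * y \<in> {1,-1,0}" by auto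
lemma int_neg: "(x::real) \<in> {1,-1,0} \<Longrightarrow> - x \<in> {1,-1,0}" by auto

theorem theorem7p5:
  fixes n :: nat
    and J :: "nat \<Rightarrow> real^'a \<Rightarrow> real^'a" and BV :: "real^'a \<Rightarrow> real^'a \<Rightarrow> real"
    and K :: "nat \<Rightarrow> real^'b \<Rightarrow> real^'b" and BU :: "real^'b \<Rightarrow> real^'b \<Rightarrow> real"
    and B :: "real^('a \<times> 'b) \<Rightarrow> real^('a \<times> 'b) \<Rightarrow> real"
  assumes V: "admissible_integral_module n 0 J BV"
    and V_pos: "\<forall>x. x \<noteq> 0 \<longrightarrow> BV x x > 0"
    and U: "admissible_integral_module 0 2 K BU"
    and B_bil: "bilinear B"
    and B_tensor: "\<forall>v u v' u'. B (tensor v u) (tensor v' u') = BV v v' * BU u u'"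
  shows "\<exists>L. admissible_integral_module 0 (n + 2) L B"
proof -
  have admV: "admissible_module n 0 J BV" using V unfolding admissible_integral_module_def by blast
  then have cV: "clifford_rep n 0 J" and spV: "scalar_product BV"
    and BVsk': "\<forall>k<n + 0. \<forall>u v. BV (J k u) v = - BV u (J k v)"
    unfolding admissible_module_def by blast+
  have c1: "\<forall>k<n. linear (J k)" and c2: "\<forall>k<n. \<forall>x. J k (J k x) = - (gen_sign n k *\<^sub>R x)"
    and c3: "\<forall>k<n. \<forall>l<n. k \<noteq> l \<longrightarrow> (\<forall>x. J k (J l x) = - J l (J k x))"
    using cV unfolding clifford_rep_def add_0_right by blast+
  have Jlin: "\<And>k. k < n \<Longrightarrow> linear (J k)" using c1 by blast
  have Jsq: "\<And>k x. k < n \<Longrightarrow> J k (J k x) = - x"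
  proof -
    fix k x assume "k < n" then show "J k (J k x) = - x" using c2 by (simp add: gen_sign_def)
  qed
  have Janti: "\<And>k l x. k < n \<Longrightarrow> l < n \<Longrightarrow> k \<noteq> l \<Longrightarrow> J k (J l x) = - J l (J k x)"
    using c3 by blast
  have BVbil: "bilinear BV" and BVsym: "\<And>x y. BV x y = BV y x" using spV unfolding scalar_product_def by blast+
  have BVsk: "\<And>k x y. k < n \<Longrightarrow> BV (J k x) y = - BV x (J k y)" using BVsk' by simp
  obtain SV where SVi: "independent SV" and SVs: "span SV = UNIV"
    and SVo: "\<And>a b. a \<in> SV \<Longrightarrow> b \<in> SV \<Longrightarrow> a \<noteq> b \<Longrightarrow> BV a b = 0"
    and SVn: "\<And>a. a \<in> SV \<Longrightarrow> BV a a = 1 \<or> BV a a = -1"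
    and SVint: "\<And>k a b. k < n \<Longrightarrow> a \<in> SV \<Longrightarrow> b \<in> SV \<Longrightarrow> BV (J k a) b \<in> {1, -1, 0}"
    using V unfolding admissible_integral_module_def by force
  have SVf: "finite SV" using SVi finiteI_independent by blast
  have SVval: "BV a b \<in> {1,-1,0}" if "a \<in> SV" "b \<in> SV" for a b
    using SVo[OF that] SVn[OF that(1)] by (cases "a = b") auto
  have admU: "admissible_module 0 2 K BU" using U unfolding admissible_integral_module_def by blast
  then have cU: "clifford_rep 0 2 K" and spU: "scalar_product BU"
    and BUsk: "\<forall>k<0 + 2. \<forall>u v. BU (K k u) v = - BU u (K k v)"
    unfolding admissible_module_def by blast+
  have d1: "\<forall>k<2. linear (K k)" and d2: "\<forall>k<2. \<forall>x. K k (K k x) = - (gen_sign 0 k *\<^sub>R x)"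
    and d3: "\<forall>k<2. \<forall>l<2. k \<noteq> l \<longrightarrow> (\<forall>x. K k (K l x) = - K l (K k x))"
    using cU unfolding clifford_rep_def add_0_left by blast+
  have Klin: "linear (K 0)" "linear (K 1)" using d1 by auto
  have Ksq: "K 0 (K 0 x) = x" "K 1 (K 1 x) = x" for x
  proof -
    have "K 0 (K 0 x) = - (gen_sign 0 0 *\<^sub>R x)" "K 1 (K 1 x) = - (gen_sign 0 1 *\<^sub>R x)"
      using d2 by auto
    then show "K 0 (K 0 x) = x" "K 1 (K 1 x) = x" by (simp_all add: gen_sign_def)
  qed
  have Kanti: "K 1 (K 0 x) = - K 0 (K 1 x)" for x
  proof -
    have "(1::nat) < 2" "(0::nat) < 2" "(1::nat) \<noteq> 0" by auto
    then show ?thesis using d3 by blast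
  qed
  have BU3: "bilinear BU" "\<And>x y. BU x y = BU y x" "\<And>x. (\<forall>y. BU x y = 0) \<Longrightarrow> x = 0"
    using spU unfolding scalar_product_def by blast+
  have BUsk0: "BU (K 0 x) y = - BU x (K 0 y)" for x y
  proof -
    have "(0::nat) < 0 + 2" by simp
    then show ?thesis using BUsk by blast
  qed
  have BUsk1: "BU (K 1 x) y = - BU x (K 1 y)" for x y
  proof -
    have "(1::nat) < 0 + 2" by simp
    then show ?thesis using BUsk by blast
  qed
  define K0 where "K0 = K 0"
  define K1 where "K1 = K 1"
  interpret U: cl02 "K0" "K1" BU
    using Klin Ksq Kanti BU3 BUsk0 BUsk1 unfolding K0_def[symmetric] K1_def[symmetric]
    by (intro cl02.intro) blast+
  obtain E where ok: "U.OK E" and full: "\<forall>x. U.Exp E x = x" using U.exists_full by blast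
  define Q where "Q = U.QQ E"
  define M where "M = U.Mop E"
  have Ef: "finite E" using ok unfolding U.OK_def by blast
  have Qf: "finite Q" unfolding Q_def using U.QQ_fin[OF Ef] .
  have Qs: "span Q = UNIV" unfolding Q_def using U.QQ_span[OF full] .
  have Mlin: "linear M" unfolding M_def by (rule U.M_lin)
  have MM: "M (M x) = - x" for x unfolding M_def using U.M_M[OF ok full] .
  have MK0: "M (K0 x) = - K0 (M x)" for x unfolding M_def by (rule U.M_K0)
  have MK1: "M (K1 x) = - K1 (M x)" for x unfolding M_def by (rule U.M_K1)
  define L where "L k = (if k < n then optens (J k) M else if k = n then optens (\<lambda>x. x) (K0)
      else optens (\<lambda>x. x) (K1))" for k
  have Llin: "linear (L k)" for k unfolding L_def by (simp add: linear_optens)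
  have kcases: "k < n \<or> k = n \<or> k = Suc n" if "k < 0 + (n + 2)" for k using that by arith
  have LT1: "L k (tensor v u) = tensor (J k v) (M u)" if "k < n" for k v u
    using that by (simp add: L_def optens_tensor Jlin Mlin)
  have LT2: "L n (tensor v u) = tensor v (K0 u)" for v u
    by (simp add: L_def optens_tensor lin_idf U.lin0)
  have Ln1: "L (Suc n) = optens (\<lambda>x. x) (K1)" unfolding L_def by simp
  have LT3: "L (Suc n) (tensor v u) = tensor v (K1 u)" for v u
    unfolding Ln1 by (rule optens_tensor[OF lin_idf U.lin1])
  have sq: "L k (L k x) = x" if k: "k < 0 + (n + 2)" for k x
  proof -
    have "(\<lambda>x. L k (L k x)) = (\<lambda>x. x)"
    proof (rule lin_eq_tensor[OF lin_comp2[OF Llin Llin] lin_idf])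
      fix v u
      show "L k (L k (tensor v u)) = tensor v u"
        using kcases[OF k] by (auto simp: LT1 LT2 LT3 Jsq MM U.sq0 U.sq1)
    qed
    then show ?thesis by (metis)
  qed
  have anti: "L k (L l x) = - L l (L k x)" if k: "k < 0 + (n + 2)" and l: "l < 0 + (n + 2)" and kl: "k \<noteq> l" for k l x
  proof -
    have "(\<lambda>x. L k (L l x)) = (\<lambda>x. - L l (L k x))"
    proof (rule lin_eq_tensor[OF lin_comp2[OF Llin Llin] lin_comp2n[OF Llin Llin]])
      fix v u
      show "L k (L l (tensor v u)) = - L l (L k (tensor v u))"
      proof (cases "k < n")
        case True
        show ?thesis
        proof (cases "l < n")
          case True
          then show ?thesis using \<open>k < n\<close> Janti[OF \<open>k < n\<close> True kl] by (simp add: LT1)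
        next
          case False
          then show ?thesis using kcases[OF l] \<open>k < n\<close>
            by (auto simp: LT1 LT2 LT3 MK0 MK1)
        qed
      next
        case False
        show ?thesis
        proof (cases "l < n")
          case True
          then show ?thesis using kcases[OF k] \<open>\<not> k < n\<close>
            by (auto simp: LT1 LT2 LT3 MK0 MK1)
        next
          case False
          then show ?thesis using kcases[OF k] kcases[OF l] \<open>\<not> k < n\<close> kl
            by (auto simp: LT1 LT2 LT3 U.anti)
        qed
      qed
    qed
    then show ?thesis by metis
  qed
  have Bsym: "B x y = B y x" for x y
  proof -
    have "B = (\<lambda>x y. B y x)"
      by (rule bilin_eq_tensor[OF B_bil bil_swap[OF B_bil]]) (simp add: B_tensor BVsym[of _ "_"] U.sym[of _ "_"])
    then show ?thesis by (metis)
  qed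
  have skew: "B (L k x) y = - B x (L k y)" if k: "k < 0 + (n + 2)" for k x y
  proof -
    have "(\<lambda>x y. B (L k x) y) = (\<lambda>x y. - B x (L k y))"
    proof (rule bilin_eq_tensor[OF bil_compL[OF B_bil Llin] bil_compR[OF B_bil Llin]])
      fix v u v' u'
      have Ms: "BU (M a) b = BU a (M b)" for a b unfolding M_def by (rule U.M_sym)
      show "B (L k (tensor v u)) (tensor v' u') = - B (tensor v u) (L k (tensor v' u'))"
        using kcases[OF k] by (auto simp: LT1 LT2 LT3 B_tensor BVsk U.sk0 U.sk1 Ms)
    qed
    then show ?thesis by metis
  qed
  define S where "S = (\<lambda>(a, q). tensor a q) ` (SV \<times> Q)"
  have Smem: "\<exists>a q. a \<in> SV \<and> q \<in> Q \<and> s = tensor a q" if "s \<in> S" for s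
    using that unfolding S_def by auto
  have Sf: "finite S" unfolding S_def using SVf Qf by simp
  have Qc: "\<And>q q'. q \<in> Q \<Longrightarrow> q' \<in> Q \<Longrightarrow> (q \<noteq> q' \<longrightarrow> BU q q' = 0) \<and> (BU q q = 1 \<or> BU q q = -1)"
    unfolding Q_def using U.QQ_cases[OF ok] by blast
  have Sorth: "B s t = 0" if st: "s \<in> S" "t \<in> S" "s \<noteq> t" for s t
  proof -
    obtain a q a' q' where aq: "a \<in> SV" "q \<in> Q" "s = tensor a q" and aq': "a' \<in> SV" "q' \<in> Q" "t = tensor a' q'"
      using Smem[OF st(1)] Smem[OF st(2)] by blast
    show ?thesis
    proof (cases "a = a'")
      case True
      then have "q \<noteq> q'" using aq aq' st by auto
      then show ?thesis using Qc[OF aq(2) aq'(2)] aq aq' B_tensor by simp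
    next
      case False then show ?thesis using SVo[OF aq(1) aq'(1)] aq aq' B_tensor by simp
    qed
  qed
  have Snorm: "B s s = 1 \<or> B s s = -1" if sS: "s \<in> S" for s
  proof -
    obtain a q where aq: "a \<in> SV" "q \<in> Q" "s = tensor a q" using Smem[OF sS] by blast
    then show ?thesis using SVn[OF aq(1)] Qc[OF aq(2) aq(2)] B_tensor by auto
  qed
  have Sind: "independent S"
    by (rule orth_indep[OF B_bil Sf]) (use Sorth Snorm in force)+
  have tspan: "tensor v u \<in> span S" for v u
  proof -
    have "v \<in> span SV" using SVs by simp
    then obtain c where c: "v = (\<Sum>a\<in>SV. c a *\<^sub>R a)" using span_finite[OF SVf] by auto
    have "u \<in> span Q" using Qs by simp
    then obtain d where d: "u = (\<Sum>q\<in>Q. d q *\<^sub>R q)" using span_finite[OF Qf] by auto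
    have "tensor v u = (\<Sum>(a, q)\<in>SV \<times> Q. tensor (c a *\<^sub>R a) (d q *\<^sub>R q))"
      unfolding c d by (rule bilinear_sum[OF bilinear_tensor])
    also have "\<dots> \<in> span S"
    proof (rule span_sum)
      fix p assume p: "p \<in> SV \<times> Q"
      obtain a q where pq: "p = (a, q)" by fastforce
      have "tensor (c a *\<^sub>R a) (d q *\<^sub>R q) = (c a * d q) *\<^sub>R tensor a q"
        by (simp add: bilinear_lmul[OF bilinear_tensor] bilinear_rmul[OF bilinear_tensor])
      moreover have "tensor a q \<in> S" using p pq unfolding S_def by force
      ultimately show "(case p of (a, q) \<Rightarrow> tensor (c a *\<^sub>R a) (d q *\<^sub>R q)) \<in> span S"
        using pq by (simp add: span_base span_scale)
    qed
    finally show ?thesis .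
  qed
  have Sspan: "span S = UNIV"
  proof -
    have "Basis \<subseteq> span S" using tspan Basis_tensor by blast
    then have "span Basis \<subseteq> span S" by (rule span_minimal) (rule subspace_span)
    then show ?thesis by auto
  qed
  have Bnd: "x = 0" if "\<forall>y. B x y = 0" for x
    by (rule orth_nondeg[OF B_bil Sf Sspan]) (use Sorth Snorm that in force)+
  have negI: "x \<in> {1,-1,0} \<Longrightarrow> y = - x \<Longrightarrow> y \<in> {1,-1,0}" for x y :: real by auto
  have MQ: "BU (M q) q' \<in> {1,-1,0}" if "q \<in> Q" "q' \<in> Q" for q q'
  proof -
    have "M q \<in> Q \<or> - M q \<in> Q" using U.M_QQ[OF ok] that unfolding Q_def M_def by blast
    then show ?thesis
    proof
      assume "M q \<in> Q" then show ?thesis using U.QQ_val[OF ok] that unfolding Q_def by blast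
    next
      assume "- M q \<in> Q" then have "BU (- M q) q' \<in> {1,-1,0}"
        using U.QQ_val[OF ok] that unfolding Q_def by blast
      then show ?thesis by (rule negI) simp
    qed
  qed
  have K0Q: "BU (K0 q) q' \<in> {1,-1,0}" if "q \<in> Q" "q' \<in> Q" for q q'
    using U.QQ_val[OF ok] U.QQ_K0 that unfolding Q_def by blast
  have K1Q: "BU (K1 q) q' \<in> {1,-1,0}" if "q \<in> Q" "q' \<in> Q" for q q'
  proof -
    have "K1 q \<in> Q \<or> - K1 q \<in> Q" using U.QQ_K1 that unfolding Q_def by blast
    then show ?thesis
    proof
      assume "K1 q \<in> Q" then show ?thesis using U.QQ_val[OF ok] that unfolding Q_def by blast
    next
      assume "- K1 q \<in> Q" then have "BU (- K1 q) q' \<in> {1,-1,0}"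
        using U.QQ_val[OF ok] that unfolding Q_def by blast
      then show ?thesis by (rule negI) simp
    qed
  qed
  have Sint: "B (L k s) t \<in> {1,-1,0}" if k: "k < 0 + (n + 2)" and st: "s \<in> S" "t \<in> S" for k s t
  proof -
    obtain a q a' q' where aq: "a \<in> SV" "q \<in> Q" "s = tensor a q" and aq': "a' \<in> SV" "q' \<in> Q" "t = tensor a' q'"
      using Smem[OF st(1)] Smem[OF st(2)] by blast
    consider "k < n" | "k = n" | "k = Suc n" using kcases[OF k] by blast
    then show ?thesis
    proof cases
      case 1
      have "B (L k s) t = BV (J k a) a' * BU (M q) q'" using aq aq' 1 by (simp add: LT1 B_tensor)
      then show ?thesis using int_mult[OF SVint[OF 1 aq(1) aq'(1)] MQ[OF aq(2) aq'(2)]] by simp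
    next
      case 2
      have "B (L k s) t = BV a a' * BU (K0 q) q'" using aq aq' 2 by (simp add: LT2 B_tensor)
      then show ?thesis using int_mult[OF SVval[OF aq(1) aq'(1)] K0Q[OF aq(2) aq'(2)]] by simp
    next
      case 3
      have "B (L k s) t = BV a a' * BU (K1 q) q'" using aq aq' 3 by (simp add: LT3 B_tensor)
      then show ?thesis using int_mult[OF SVval[OF aq(1) aq'(1)] K1Q[OF aq(2) aq'(2)]] by simp
    qed
  qed
  show ?thesis
  proof (intro exI[of _ L])
    show "admissible_integral_module 0 (n + 2) L B"
      unfolding admissible_integral_module_def admissible_module_def clifford_rep_def scalar_product_def
    proof (intro conjI allI impI ballI)
      show "\<And>k. k < 0 + (n + 2) \<Longrightarrow> linear (L k)" using Llin by blast
      show "\<And>k x. k < 0 + (n + 2) \<Longrightarrow> L k (L k x) = - (gen_sign 0 k *\<^sub>R x)"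
        using sq by (simp add: gen_sign_def)
      show "\<And>k l x. k < 0 + (n + 2) \<Longrightarrow> l < 0 + (n + 2) \<Longrightarrow> k \<noteq> l \<Longrightarrow> L k (L l x) = - L l (L k x)"
        using anti by blast
      show "bilinear B" by (rule B_bil)
      show "\<And>x y. B x y = B y x" by (rule Bsym)
      show "\<And>x. \<forall>y. B x y = 0 \<Longrightarrow> x = 0" by (rule Bnd)
      show "\<And>k u v. k < 0 + (n + 2) \<Longrightarrow> B (L k u) v = - B u (L k v)" by (rule skew)
      show "\<exists>S. independent S \<and> span S = UNIV \<and> (\<forall>a\<in>S. \<forall>b\<in>S. a \<noteq> b \<longrightarrow> B a b = 0) \<and>
          (\<forall>a\<in>S. B a a = 1 \<or> B a a = - 1) \<and> (\<forall>k<0 + (n + 2). \<forall>a\<in>S. \<forall>b\<in>S. B (L k a) b \<in> {1, - 1, 0})"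
        using Sind Sspan Sorth Snorm Sint by blast
    qed
  qed
qed

end
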